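(* Let $n\geq 2$. For every $\sigma\in(0,1)$ there exists a Caccioppoli set $E\subset\mathbb{R}^n$ such that \[ P_s(E)<\infty\quad\forall\,s\in(0,\sigma)\qquad\text{and}\qquad P_s(E)=\infty\quad\forall\,s\in[\sigma,1). \]
   Context: A Caccioppoli set is a set of locally finite (classical) perimeter, i.e. $\chi_E\in BV_{loc}(\mathbb{R}^n)$. For $s\in(0,1)$, $P_s(E):=\int_E\int_{\mathbb{R}^n\setminus E}|x-y|^{-n-s}\,dx\,dy$ is the $s$-fractional perimeter of $E$ in $\mathbb{R}^n$. *)

theory Defs
  imports "HOL-Analysis.Analysis"
begin

definition C1c_field :: "(real^'n) set \<Rightarrow> (real^'n \<Rightarrow> real^'n) \<Rightarrow> bool" where
  "C1c_field U \<phi> \<longleftrightarrow>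
     (\<exists>D. (\<forall>x. (\<phi> has_derivative D x) (at x)) \<and> (\<forall>v. continuous_on UNIV (\<lambda>x. D x v)))
     \<and> compact (closure {x. \<phi> x \<noteq> 0}) \<and> closure {x. \<phi> x \<noteq> 0} \<subseteq> U"

definition divergence :: "(real^'n \<Rightarrow> real^'n) \<Rightarrow> real^'n \<Rightarrow> real" where
  "divergence \<phi> x = (\<Sum>i\<in>UNIV. (frechet_derivative \<phi> (at x) (axis i 1)) $ i)"

text \<open>Caccioppoli set: chi_E in BV_loc, i.e. E measurable and its (distributional)
  perimeter in every ball is finite.\<close>
definition caccioppoli :: "(real^'n) set \<Rightarrow> bool" where
  "caccioppoli E \<longleftrightarrow> E \<in> sets lebesgue \<and>
     (\<forall>r::real. \<exists>B::real. \<forall>\<phi>. C1c_field (ball 0 r) \<phi> \<and> (\<forall>x. norm (\<phi> x) \<le> 1)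
        \<longrightarrow> integral E (divergence \<phi>) \<le> B)"

definition frac_perimeter :: "real \<Rightarrow> (real^'n) set \<Rightarrow> ennreal" where
  "frac_perimeter s E = (\<integral>\<^sup>+ x. \<integral>\<^sup>+ y. indicator E x * indicator (- E) y *
      ennreal (norm (x - y) powr (- (real CARD('n) + s))) \<partial>lebesgue \<partial>lebesgue)"

end

theory Submission
  imports Defs
begin


lemma box_measure_cart:
  fixes a b :: "real^'n"
  assumes "\<And>i. a$i \<le> b$i"
  shows "emeasure lebesgue (box a b) = ennreal (\<Prod>i\<in>UNIV. b$i - a$i)"
  and "emeasure lebesgue (cbox a b) = ennreal (\<Prod>i\<in>UNIV. b$i - a$i)"
proof -
  have eq: "(\<Prod>b'\<in>Basis. (b - a) \<bullet> b') = (\<Prod>i\<in>UNIV. b$i - a$i)"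
    by (simp add: Basis_vec_def cart_eq_inner_axis axis_eq_axis prod.UNION_disjoint inner_diff_left)
  have "\<forall>b'\<in>Basis. a \<bullet> b' \<le> b \<bullet> b'" using assms
    by (auto simp: Basis_vec_def cart_eq_inner_axis)
  then show "emeasure lebesgue (box a b) = ennreal (\<Prod>i\<in>UNIV. b$i - a$i)"
    "emeasure lebesgue (cbox a b) = ennreal (\<Prod>i\<in>UNIV. b$i - a$i)"
    by (simp_all add: emeasure_lborel_box_eq emeasure_lborel_cbox_eq eq)
qed

lemma dyadic_ex:
  fixes q :: real assumes "1 \<le> q"
  shows "\<exists>j::nat. 2^j \<le> q \<and> q < 2^(Suc j)"
proof -
  have ex: "\<exists>j::nat. q < 2^(Suc j)"
    using real_arch_pow[of 2 q] by (metis less_trans lessI one_less_numeral_iff power_strict_increasing_iff semiring_norm(76))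
  define j where "j = (LEAST j::nat. q < 2^(Suc j))"
  have j: "q < 2^(Suc j)" unfolding j_def by (rule LeastI_ex[OF ex])
  have "2^j \<le> q"
  proof (cases j)
    case 0 then show ?thesis using assms by simp
  next
    case (Suc m)
    then have "\<not> q < 2^(Suc m)" using not_less_Least[of m "\<lambda>j. q < 2^(Suc j)"] j_def by simp
    then show ?thesis using Suc by simp
  qed
  with j show ?thesis by blast
qed

lemma cover_bound:
  fixes f :: "'a \<Rightarrow> ennreal" and S :: "nat \<Rightarrow> 'a set" and c :: "nat \<Rightarrow> ennreal"
  assumes "\<And>x. f x \<noteq> 0 \<Longrightarrow> \<exists>j. x \<in> S j \<and> f x \<le> c j"
  shows "f x \<le> (\<Sum>j. c j * indicator (S j) x)"
proof (cases "f x = 0")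
  case False
  then obtain j where j: "x \<in> S j" "f x \<le> c j" using assms by blast
  have "(\<Sum>j\<in>{j}. c j * indicator (S j) x) \<le> (\<Sum>j. c j * indicator (S j) x)"
    by (rule sum_le_suminf) auto
  then show ?thesis using j by simp
qed simp

lemma nn_integral_cover:
  fixes S :: "nat \<Rightarrow> 'a set" and c :: "nat \<Rightarrow> ennreal"
  assumes "\<And>j. S j \<in> sets M"
  shows "(\<integral>\<^sup>+x. (\<Sum>j. c j * indicator (S j) x) \<partial>M) = (\<Sum>j. c j * emeasure M (S j))"
  using assms by (subst nn_integral_suminf) (auto simp: nn_integral_cmult_indicator)

lemma DIM_n: "DIM(real^'n) = CARD('n)" by simp



lemma shell_alg:
  fixes \<delta> s :: real and N j :: nat
  assumes "0 < \<delta>"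
  shows "(2^j*\<delta>) powr (-(real N + s)) * (2^(Suc j) * \<delta>)^N = 2^N * \<delta> powr (-s) * (2 powr (-s))^j"
proof -
  define t where "t = 2^j*\<delta>"
  have t: "0 < t" using assms by (simp add: t_def)
  have "(2^(Suc j) * \<delta>)^N = 2^N * t powr N" using t by (simp add: t_def powr_realpow power_mult_distrib)
  then have "(2^j*\<delta>) powr (-(real N + s)) * (2^(Suc j) * \<delta>)^N = 2^N * (t powr (-(real N + s)) * t powr N)"
    by (simp add: t_def)
  also have "t powr (-(real N + s)) * t powr N = t powr (-s)" by (simp add: powr_add[symmetric])
  also have "t powr (-s) = \<delta> powr (-s) * (2 powr (-s))^j"
  proof -
    have "(2 powr real j) powr - s = (2 powr - s) powr real j" by (simp add: powr_powr mult.commute)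
    then show ?thesis using assms by (simp add: t_def powr_mult powr_realpow[symmetric])
  qed
  finally show ?thesis by simp
qed

lemma inner_shell:
  fixes x :: "real^'n"
  assumes "0 < \<delta>" "0 < s"
  shows "(\<integral>\<^sup>+y. indicator {y. \<delta> \<le> norm (x - y)} y * ennreal (norm (x - y) powr (-(real CARD('n) + s))) \<partial>lebesgue)
    \<le> ennreal (unit_ball_vol (real CARD('n)) * 2^CARD('n) * \<delta> powr (-s) / (1 - 2 powr (-s)))"
proof -
  define N where "N = CARD('n)"
  define p where "p = real N + s"
  define V where "V = unit_ball_vol (real N)"
  define S where "S j = {y. 2^j*\<delta> \<le> norm (x - y)} \<inter> ball x (2^(Suc j) * \<delta>)" for j :: nat
  define c where "c j = ennreal ((2^j*\<delta>) powr (-p))" for j :: nat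
  let ?f = "\<lambda>y. indicator {y. \<delta> \<le> norm (x - y)} y * ennreal (norm (x - y) powr (-p))"
  have pt: "?f y \<le> (\<Sum>j. c j * indicator (S j) y)" for y
  proof (rule cover_bound)
    fix y assume "?f y \<noteq> 0"
    then have d: "\<delta> \<le> norm (x - y)" by (cases "\<delta> \<le> norm (x - y)") auto
    then obtain j where j: "2^j \<le> norm (x - y) / \<delta>" "norm (x - y) / \<delta> < 2^(Suc j)"
      using dyadic_ex[of "norm (x - y) / \<delta>"] assms by auto
    have j': "2^j * \<delta> \<le> norm (x - y)" "norm (x - y) < 2^(Suc j) * \<delta>"
      using j assms by (auto simp: field_simps)
    have "y \<in> S j" using j' by (simp add: S_def dist_norm)
    moreover have "norm (x - y) powr (-p) \<le> (2^j*\<delta>) powr (-p)"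
      using j' assms by (intro powr_mono2') (auto simp: p_def)
    ultimately show "\<exists>j. y \<in> S j \<and> ?f y \<le> c j" using d
      by (intro exI[of _ j]) (auto simp: c_def)
  qed
  have meas: "S j \<in> sets lebesgue" for j
    unfolding S_def by (intro sets.Int) (auto intro!: borel_closed closed_Collect_le continuous_intros)
  have "(\<integral>\<^sup>+y. ?f y \<partial>lebesgue) \<le> (\<integral>\<^sup>+y. (\<Sum>j. c j * indicator (S j) y) \<partial>lebesgue)"
    by (intro nn_integral_mono pt)
  also have "\<dots> = (\<Sum>j. c j * emeasure lebesgue (S j))" by (rule nn_integral_cover[OF meas])
  also have "\<dots> \<le> (\<Sum>j. ennreal (V * 2^N * \<delta> powr (-s) * (2 powr (-s))^j))"
  proof (intro suminf_le allI)
    fix j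
    have "emeasure lebesgue (S j) \<le> emeasure lebesgue (ball x (2^(Suc j) * \<delta>))"
      by (intro emeasure_mono) (auto simp: S_def)
    also have "\<dots> = ennreal (V * (2^(Suc j) * \<delta>)^N)"
      using emeasure_ball[where c=x and r="2^(Suc j) * \<delta>"] using assms by (simp add: V_def N_def)
    finally have "c j * emeasure lebesgue (S j) \<le> c j * ennreal (V * (2^(Suc j) * \<delta>)^N)"
      by (rule mult_left_mono) simp
    also have "\<dots> = ennreal (V * 2^N * \<delta> powr (-s) * (2 powr (-s))^j)"
      unfolding c_def using assms shell_alg[OF assms(1), of j N s]
      by (simp add: ennreal_mult'[symmetric] V_def p_def mult_ac)
    finally show "c j * emeasure lebesgue (S j) \<le> ennreal (V * 2^N * \<delta> powr (-s) * (2 powr (-s))^j)" .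
  qed auto
  also have "\<dots> = ennreal (V * 2^N * \<delta> powr (-s) / (1 - 2 powr (-s)))"
  proof (rule suminf_ennreal_eq)
    show "0 \<le> V * 2^N * \<delta> powr (-s) * (2 powr (-s))^j" for j by (simp add: V_def)
    have "2 powr (-s) < 1" using assms by (simp add: powr_less_one)
    then have "(\<lambda>j. (2 powr (-s))^j) sums (1 / (1 - 2 powr (-s)))" by (intro geometric_sums) simp
    from sums_mult[OF this, of "V * 2^N * \<delta> powr (-s)"]
    show "(\<lambda>j. V * 2^N * \<delta> powr (-s) * (2 powr (-s))^j) sums (V * 2^N * \<delta> powr (-s) / (1 - 2 powr (-s)))"
      by simp
  qed
  finally show ?thesis by (simp add: p_def N_def V_def)
qed



definition slabL :: "real^'n \<Rightarrow> real \<Rightarrow> 'n \<Rightarrow> real \<Rightarrow> (real^'n) set" where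
  "slabL a r i t = cbox a (\<chi> k. if k = i then a$k + t else a$k + r)"
definition slabH :: "real^'n \<Rightarrow> real \<Rightarrow> 'n \<Rightarrow> real \<Rightarrow> (real^'n) set" where
  "slabH a r i t = cbox (\<chi> k. if k = i then a$k + r - t else a$k) (a + vec r)"

lemma prod_slab: "(\<Prod>k\<in>UNIV. if k = (i::'n::finite) then t else r) = t * r^(CARD('n) - 1)"
proof -
  have "(\<Prod>k\<in>UNIV. if k = i then t else r) = (if i = i then t else r) * (\<Prod>k\<in>UNIV - {i}. if k = i then t else r)"
    by (rule prod.remove) auto
  also have "(\<Prod>k\<in>UNIV - {i}. if k = i then t else r) = (\<Prod>k\<in>UNIV - {i}. r)"
    by (rule prod.cong) auto
  also have "\<dots> = r ^ (CARD('n) - 1)" by (simp add: card_Diff_singleton)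
  finally show ?thesis by simp
qed

lemma slab_measure:
  fixes a :: "real^'n"
  assumes "0 \<le> t" "t \<le> r"
  shows "emeasure lebesgue (slabL a r i t) = ennreal (t * r^(CARD('n) - 1))"
    "emeasure lebesgue (slabH a r i t) = ennreal (t * r^(CARD('n) - 1))"
proof -
  have "emeasure lebesgue (slabL a r i t) = ennreal (\<Prod>k\<in>UNIV. if k = i then t else r)"
    unfolding slabL_def using assms
    by (subst box_measure_cart(2)) (auto intro!: arg_cong[where f=ennreal] prod.cong)
  then show "emeasure lebesgue (slabL a r i t) = ennreal (t * r^(CARD('n) - 1))" by (simp add: prod_slab)
  have "emeasure lebesgue (slabH a r i t) = ennreal (\<Prod>k\<in>UNIV. if k = i then t else r)"
    unfolding slabH_def using assms
    by (subst box_measure_cart(2)) (auto intro!: arg_cong[where f=ennreal] prod.cong)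
  then show "emeasure lebesgue (slabH a r i t) = ennreal (t * r^(CARD('n) - 1))" by (simp add: prod_slab)
qed



lemma cube_alg:
  fixes r s C :: real and N j :: nat
  assumes "0 < r" "1 \<le> N"
  shows "C * (r / 2^(Suc j)) powr (-s) * (2 * real N * ((r / 2^j) * r^(N - 1)))
       = C * 2 * real N * 2 powr s * r powr (real N - s) * (2 powr (s - 1))^j"
proof -
  have e: "((2::real)^(Suc j)) powr s = 2 powr s * (2 powr s)^j"
  proof -
    have "((2::real)^(Suc j)) powr s = (2 powr (real (Suc j))) powr s" by (simp only: powr_realpow)
    also have "\<dots> = 2 powr (s + real j * s)" by (simp add: powr_powr algebra_simps)
    also have "\<dots> = 2 powr s * (2 powr s)^j" by (simp add: powr_add powr_power)
    finally show ?thesis .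
  qed
  have a: "(r / 2^(Suc j)) powr (-s) = r powr (-s) * 2 powr s * (2 powr s)^j"
    using e by (simp add: powr_divide powr_minus field_simps)
  have b: "(r / 2^j) * r^(N - 1) = r^N / 2^j"
    using assms by (cases N) auto
  have c: "r powr (-s) * r^N = r powr (real N - s)"
    using assms by (simp add: powr_realpow[symmetric] powr_add[symmetric])
  have d: "(2 powr s)^j / 2^j = (2 powr (s - 1))^j"
    by (simp add: powr_diff power_divide)
  show ?thesis
    unfolding a b
    using c d by (simp add: field_simps)
qed



definition dcube :: "real^'n \<Rightarrow> real \<Rightarrow> real^'n \<Rightarrow> real" where
  "dcube a r x = Min (range (\<lambda>i. min (x$i - a$i) (a$i + r - x$i)))"

lemma dcube_le: "dcube a r x \<le> x$i - a$i" "dcube a r x \<le> a$i + r - x$i"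
proof -
  have "dcube a r x \<le> min (x$i - a$i) (a$i + r - x$i)"
    unfolding dcube_def by (rule Min_le) auto
  then show "dcube a r x \<le> x$i - a$i" "dcube a r x \<le> a$i + r - x$i" by auto
qed

lemma dcube_attained: "\<exists>i. dcube a r x = x$i - a$i \<or> dcube a r x = a$i + r - x$i"
proof -
  have "dcube a r x \<in> range (\<lambda>i. min (x$i - a$i) (a$i + r - x$i))"
    unfolding dcube_def by (rule Min_in) auto
  then obtain i where "dcube a r x = min (x$i - a$i) (a$i + r - x$i)" by auto
  then show ?thesis by (auto simp: min_def split: if_splits)
qed

lemma dcube_pos: "x \<in> box a (a + vec r) \<Longrightarrow> 0 < dcube a r x"
  using dcube_attained[of a r x] by (auto simp: mem_box_cart)

lemma dcube_half: "dcube a r x \<le> r / 2"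
  using dcube_le[of a r x undefined] by linarith

lemma dcube_dist:
  assumes "x \<in> box a (a + vec r)" "y \<notin> box a (a + vec r)"
  shows "dcube a r x \<le> norm (x - y)"
proof -
  from assms(2) obtain i where "y$i \<le> a$i \<or> a$i + r \<le> y$i" by (auto simp: mem_box_cart not_less)
  then have "dcube a r x \<le> \<bar>(x - y)$i\<bar>"
    using dcube_le[of a r x i] by auto
  also have "\<dots> \<le> norm (x - y)" by (rule component_le_norm_cart)
  finally show ?thesis .
qed

definition Cup :: "nat \<Rightarrow> real \<Rightarrow> real" where
  "Cup N s = unit_ball_vol (real N) * 2^N / (1 - 2 powr (-s)) * 2 * real N * 2 powr s / (1 - 2 powr (s - 1))"

lemma cube_bound:
  fixes a :: "real^'n"
  assumes r: "0 < r" and s: "0 < s" "s < 1"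
  shows "\<exists>h. h \<in> borel_measurable lebesgue \<and>
     (\<forall>x. (\<integral>\<^sup>+y. indicator (box a (a + vec r)) x * indicator (- box a (a + vec r)) y *
             ennreal (norm (x - y) powr (-(real CARD('n) + s))) \<partial>lebesgue) \<le> h x) \<and>
     (\<integral>\<^sup>+x. h x \<partial>lebesgue) \<le> ennreal (Cup CARD('n) s * r powr (real CARD('n) - s))"
proof -
  define N where "N = CARD('n)"
  have N1: "1 \<le> N" by (simp add: N_def Suc_leI)
  define Q where "Q = box a (a + vec r)"
  define C1 where "C1 = unit_ball_vol (real N) * 2^N / (1 - 2 powr (-s))"
  have s1: "2 powr (-s) < 1" using s by (simp add: powr_less_one)
  have C1: "0 \<le> C1" unfolding C1_def using s1 by simp
  define Sl where "Sl j = (\<Union>i. slabL a r i (r / 2^j) \<union> slabH a r i (r / 2^j))" for j :: nat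
  define cc where "cc j = ennreal (C1 * (r / 2^(Suc j)) powr (-s))" for j :: nat
  define h where "h x = (\<Sum>j. cc j * indicator (Sl j) x)" for x
  have Slm: "Sl j \<in> sets lebesgue" for j
    unfolding Sl_def slabL_def slabH_def by (intro sets.countable_UN' sets.Un) auto
  have hm: "h \<in> borel_measurable lebesgue"
    unfolding h_def using Slm by measurable
  have inner: "(\<integral>\<^sup>+y. indicator Q x * indicator (- Q) y *
             ennreal (norm (x - y) powr (-(real N + s))) \<partial>lebesgue) \<le> indicator Q x * ennreal (C1 * dcube a r x powr (-s))" for x
  proof (cases "x \<in> Q")
    case True
    have d: "0 < dcube a r x" using True dcube_pos by (auto simp: Q_def)
    have "(\<integral>\<^sup>+y. indicator Q x * indicator (- Q) y * ennreal (norm (x - y) powr (-(real N + s))) \<partial>lebesgue)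
       \<le> (\<integral>\<^sup>+y. indicator {y. dcube a r x \<le> norm (x - y)} y * ennreal (norm (x - y) powr (-(real N + s))) \<partial>lebesgue)"
      using True dcube_dist[of x a r] by (intro nn_integral_mono) (auto simp: Q_def split: split_indicator)
    also have "\<dots> \<le> ennreal (C1 * dcube a r x powr (-s))"
      using inner_shell[OF d s(1), of x] by (simp add: C1_def N_def field_simps)
    finally show ?thesis using True by simp
  qed simp
  have pt: "indicator Q x * ennreal (C1 * dcube a r x powr (-s)) \<le> h x" for x
    unfolding h_def
  proof (rule cover_bound)
    fix x assume "indicator Q x * ennreal (C1 * dcube a r x powr (-s)) \<noteq> 0"
    then have xQ: "x \<in> Q" by (cases "x \<in> Q") auto
    define d where "d = dcube a r x"
    have d: "0 < d" "d \<le> r / 2" using dcube_pos xQ dcube_half by (auto simp: Q_def d_def)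
    then obtain j where j: "2^j \<le> r / d" "r / d < 2^(Suc j)"
      using dyadic_ex[of "r / d"] by (auto simp: field_simps)
    have j': "d \<le> r / 2^j" "r / 2^(Suc j) < d" using j d
      by (auto simp: field_simps simp del: power_Suc)
    have "x \<in> Sl j"
    proof -
      obtain i where i: "d = x$i - a$i \<or> d = a$i + r - x$i"
        using dcube_attained[of a r x] by (auto simp: d_def)
      have xb: "\<forall>k. a$k < x$k \<and> x$k < a$k + r" using xQ by (auto simp: Q_def mem_box_cart)
      from i have "x \<in> slabL a r i (r / 2^j) \<or> x \<in> slabH a r i (r / 2^j)"
        using xb j'(1) by (auto simp: slabL_def slabH_def mem_box_cart less_imp_le)
      then show ?thesis by (auto simp: Sl_def)
    qed
    moreover have "d powr (-s) \<le> (r / 2^(Suc j)) powr (-s)"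
      using j' r s by (intro powr_mono2') auto
    then have "C1 * d powr (-s) \<le> C1 * (r / 2^(Suc j)) powr (-s)"
      using C1 by (intro mult_left_mono) auto
    ultimately show "\<exists>j. x \<in> Sl j \<and> indicator Q x * ennreal (C1 * dcube a r x powr (-s)) \<le> cc j"
      using xQ by (intro exI[of _ j]) (auto simp: cc_def d_def intro: ennreal_leI)
  qed
  have "(\<integral>\<^sup>+x. h x \<partial>lebesgue) = (\<Sum>j. cc j * emeasure lebesgue (Sl j))"
    unfolding h_def by (rule nn_integral_cover[OF Slm])
  also have "\<dots> \<le> (\<Sum>j. ennreal (C1 * 2 * real N * 2 powr s * r powr (real N - s) * (2 powr (s - 1))^j))"
  proof (intro suminf_le allI)
    fix j :: nat
    have t: "0 \<le> r / 2^j" "r / 2^j \<le> r" using r by (auto simp: field_simps)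
    have "emeasure lebesgue (Sl j) \<le> (\<Sum>i\<in>UNIV. emeasure lebesgue (slabL a r i (r / 2^j) \<union> slabH a r i (r / 2^j)))"
      unfolding Sl_def by (rule emeasure_subadditive_finite) (auto simp: slabL_def slabH_def)
    also have "\<dots> \<le> (\<Sum>i\<in>(UNIV::'n set). ennreal (2 * ((r / 2^j) * r^(N - 1))))"
    proof (rule sum_mono)
      fix i :: 'n
      have "emeasure lebesgue (slabL a r i (r / 2^j) \<union> slabH a r i (r / 2^j)) \<le>
          emeasure lebesgue (slabL a r i (r / 2^j)) + emeasure lebesgue (slabH a r i (r / 2^j))"
        by (rule emeasure_subadditive) (auto simp: slabL_def slabH_def)
      also have "\<dots> = ennreal (2 * ((r / 2^j) * r^(N - 1)))"
        using slab_measure[OF t, of a i] t r by (simp add: N_def ennreal_plus[symmetric] del: ennreal_plus)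
      finally show "emeasure lebesgue (slabL a r i (r / 2^j) \<union> slabH a r i (r / 2^j)) \<le> ennreal (2 * ((r / 2^j) * r^(N - 1)))" .
    qed
    also have "\<dots> = ennreal (2 * real N * ((r / 2^j) * r^(N - 1)))"
      using r by (simp add: N_def ennreal_of_nat_eq_real_of_nat ennreal_mult'[symmetric] mult_ac)
    finally have "cc j * emeasure lebesgue (Sl j) \<le> cc j * ennreal (2 * real N * ((r / 2^j) * r^(N - 1)))"
      by (rule mult_left_mono) simp
    also have "\<dots> = ennreal (C1 * (r / 2^(Suc j)) powr (-s) * (2 * real N * ((r / 2^j) * r^(N - 1))))"
      unfolding cc_def using C1 r by (simp add: ennreal_mult'[symmetric])
    also have "\<dots> = ennreal (C1 * 2 * real N * 2 powr s * r powr (real N - s) * (2 powr (s - 1))^j)"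
      using cube_alg[OF r N1] by simp
    finally show "cc j * emeasure lebesgue (Sl j) \<le> ennreal (C1 * 2 * real N * 2 powr s * r powr (real N - s) * (2 powr (s - 1))^j)" .
  qed auto
  also have "\<dots> = ennreal (C1 * 2 * real N * 2 powr s * r powr (real N - s) / (1 - 2 powr (s - 1)))"
  proof (rule suminf_ennreal_eq)
    show "0 \<le> C1 * 2 * real N * 2 powr s * r powr (real N - s) * (2 powr (s - 1))^j" for j
      using C1 by simp
    have "2 powr (s - 1) < 1" using s by (simp add: powr_less_one)
    then have "(\<lambda>j. (2 powr (s - 1))^j) sums (1 / (1 - 2 powr (s - 1)))" by (intro geometric_sums) simp
    from sums_mult[OF this, of "C1 * 2 * real N * 2 powr s * r powr (real N - s)"]
    show "(\<lambda>j. C1 * 2 * real N * 2 powr s * r powr (real N - s) * (2 powr (s - 1))^j) sums (C1 * 2 * real N * 2 powr s * r powr (real N - s) / (1 - 2 powr (s - 1)))"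
      by simp
  qed
  also have "\<dots> = ennreal (Cup CARD('n) s * r powr (real CARD('n) - s))"
    by (simp add: Cup_def C1_def N_def)
  finally have int: "(\<integral>\<^sup>+x. h x \<partial>lebesgue) \<le> ennreal (Cup CARD('n) s * r powr (real CARD('n) - s))" .
  show ?thesis
    using hm int inner pt order_trans unfolding Q_def N_def by blast
qed



definition rr :: "real \<Rightarrow> nat \<Rightarrow> nat \<Rightarrow> real" where
  "rr \<sigma> N k = real (Suc k) powr (-1 / (real N - \<sigma>))"
definition ctr :: "nat \<Rightarrow> real^'n" where
  "ctr k = (\<chi> i. if i = undefined then 3 * real k else 0)"
definition ctr' :: "real \<Rightarrow> nat \<Rightarrow> real^'n" where
  "ctr' \<sigma> k = (\<chi> i. if i = undefined then 3 * real k + rr \<sigma> CARD('n) k else 0)"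
definition Qk :: "real \<Rightarrow> nat \<Rightarrow> (real^'n) set" where
  "Qk \<sigma> k = box (ctr k) (ctr k + vec (rr \<sigma> CARD('n) k))"
definition Qk' :: "real \<Rightarrow> nat \<Rightarrow> (real^'n) set" where
  "Qk' \<sigma> k = box (ctr' \<sigma> k) (ctr' \<sigma> k + vec (rr \<sigma> CARD('n) k))"
definition EE :: "real \<Rightarrow> (real^'n) set" where
  "EE \<sigma> = (\<Union>k. Qk \<sigma> k)"

lemma rr_pos: "0 < rr \<sigma> N k" by (simp add: rr_def)

lemma rr_le1: assumes "\<sigma> < 1" "1 \<le> N" shows "rr \<sigma> N k \<le> 1"
proof -
  have "0 < real N - \<sigma>" using assms by simp
  then have "-1 / (real N - \<sigma>) \<le> 0" by simp
  then have "real (Suc k) powr (-1 / (real N - \<sigma>)) \<le> real (Suc k) powr 0"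
    by (intro powr_mono) auto
  then show ?thesis unfolding rr_def by simp
qed

lemma Qk_coord:
  fixes x :: "real^'n"
  shows "x \<in> Qk \<sigma> k \<Longrightarrow> 3 * real k < x$undefined \<and> x$undefined < 3 * real k + rr \<sigma> CARD('n) k"
  unfolding Qk_def mem_box_cart ctr_def by (drule spec[where x=undefined]) simp

lemma Qk'_coord:
  fixes x :: "real^'n"
  shows "x \<in> Qk' \<sigma> k \<Longrightarrow> 3 * real k + rr \<sigma> CARD('n) k < x$undefined \<and> x$undefined < 3 * real k + 2 * rr \<sigma> CARD('n) k"
  unfolding Qk'_def mem_box_cart ctr'_def by (drule spec[where x=undefined]) simp

lemma Qk_disj:
  assumes "\<sigma> < 1" "j \<noteq> k" shows "Qk \<sigma> j \<inter> Qk \<sigma> k = ({} :: (real^'n) set)"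
proof -
  have N: "1 \<le> CARD('n)" by (simp add: Suc_leI)
  { fix x :: "real^'n" assume "x \<in> Qk \<sigma> j" "x \<in> Qk \<sigma> k"
    from Qk_coord[OF this(1)] Qk_coord[OF this(2)] rr_le1[OF assms(1) N, of j] rr_le1[OF assms(1) N, of k]
    have "3 * real j < 3 * real k + 1" "3 * real k < 3 * real j + 1" by linarith+
    then have "j = k" by linarith
    with assms have False by simp }
  then show ?thesis by blast
qed

lemma Qk'_disj:
  assumes "\<sigma> < 1" shows "Qk' \<sigma> k \<inter> Qk \<sigma> j = ({} :: (real^'n) set)"
proof -
  have N: "1 \<le> CARD('n)" by (simp add: Suc_leI)
  { fix x :: "real^'n" assume "x \<in> Qk' \<sigma> k" "x \<in> Qk \<sigma> j"
    from Qk'_coord[OF this(1)] Qk_coord[OF this(2)] rr_le1[OF assms(1) N, of j] rr_le1[OF assms(1) N, of k]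
    have a: "3 * real k + rr \<sigma> CARD('n) k < 3 * real j + rr \<sigma> CARD('n) j" "3 * real j < 3 * real k + 2"
      by linarith+
    have "j \<noteq> k" using a(1) by auto
    moreover have "j \<le> k" using a(2) by linarith
    moreover have "\<not> j < k" using a(1) rr_le1[OF assms(1) N, of j] rr_pos[of \<sigma> "CARD('n)" k] by auto
    ultimately have False by simp }
  then show ?thesis by blast
qed

lemma Qk'_notin: "\<sigma> < 1 \<Longrightarrow> y \<in> Qk' \<sigma> k \<Longrightarrow> y \<notin> EE \<sigma>"
  using Qk'_disj unfolding EE_def by blast

lemma Qk_measure: "emeasure lebesgue (Qk \<sigma> k :: (real^'n) set) = ennreal (rr \<sigma> CARD('n) k ^ CARD('n))"
  "emeasure lebesgue (Qk' \<sigma> k :: (real^'n) set) = ennreal (rr \<sigma> CARD('n) k ^ CARD('n))"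
  unfolding Qk_def Qk'_def using rr_pos[of \<sigma> "CARD('n)" k]
  by (subst box_measure_cart; simp)+

lemma Qk_Qk'_dist:
  assumes "x \<in> Qk \<sigma> k" "y \<in> (Qk' \<sigma> k :: (real^'n) set)"
  shows "norm (x - y) \<le> 2 * real CARD('n) * rr \<sigma> CARD('n) k"
proof -
  have "\<bar>(x - y)$i\<bar> \<le> 2 * rr \<sigma> CARD('n) k" for i
  proof -
    have a: "ctr k $ i < x$i \<and> x$i < ctr k $ i + rr \<sigma> CARD('n) k"
      using assms(1) unfolding Qk_def mem_box_cart by simp
    have b: "ctr' \<sigma> k $ i < y$i \<and> y$i < ctr' \<sigma> k $ i + rr \<sigma> CARD('n) k"
      using assms(2) unfolding Qk'_def mem_box_cart by simp
    show ?thesis using a b rr_pos[of \<sigma> "CARD('n)" k]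
      by (cases "i = undefined") (auto simp: ctr_def ctr'_def abs_le_iff)
  qed
  then have "(\<Sum>i\<in>UNIV. \<bar>(x - y)$i\<bar>) \<le> (\<Sum>i\<in>(UNIV::'n set). 2 * rr \<sigma> CARD('n) k)"
    by (intro sum_mono)
  then show ?thesis using norm_le_l1_cart[of "x - y"] by simp
qed



lemma K_meas[measurable]:
  fixes x :: "real^'n"
  shows "(\<lambda>y. ennreal (norm (x - y) powr c)) \<in> borel_measurable lebesgue"
proof -
  have "(\<lambda>y. ennreal (norm (x - y) powr c)) \<in> borel_measurable lborel" by measurable
  then show ?thesis by (rule measurable_completion)
qed

lemma meas_term:
  fixes x :: "real^'n"
  shows "(\<lambda>y. indicator (box a b) x * indicator (- box a b) y * ennreal (norm (x - y) powr c)) \<in> borel_measurable lebesgue"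
proof -
  have "(\<lambda>y. indicator (box a b) x * indicator (- box a b) y * ennreal (norm (x - y) powr c)) \<in> borel_measurable lborel"
    by measurable
  then show ?thesis by (rule measurable_completion)
qed

lemma rr_powr: "0 < real N - \<sigma> \<Longrightarrow> rr \<sigma> N k powr (real N - s) = real (Suc k) powr (-(real N - s) / (real N - \<sigma>))"
  unfolding rr_def powr_powr by (rule arg_cong[where f="\<lambda>e. _ powr e"]) (simp add: field_simps)

lemma rr_summable_iff:
  assumes "0 < real N - \<sigma>"
  shows "summable (\<lambda>k. rr \<sigma> N k powr (real N - s)) \<longleftrightarrow> s < \<sigma>"
proof -
  have "summable (\<lambda>k. rr \<sigma> N k powr (real N - s)) \<longleftrightarrow> summable (\<lambda>k. real (Suc k) powr (-(real N - s) / (real N - \<sigma>)))"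
    using rr_powr[OF assms] by simp
  also have "\<dots> \<longleftrightarrow> summable (\<lambda>k. real k powr (-(real N - s) / (real N - \<sigma>)))"
    by (rule summable_Suc_iff)
  also have "\<dots> \<longleftrightarrow> -(real N - s) / (real N - \<sigma>) < -1" by (rule summable_real_powr_iff)
  also have "\<dots> \<longleftrightarrow> s < \<sigma>" using assms by (simp add: field_simps)
  finally show ?thesis .
qed

lemma Cup_nonneg: "0 < s \<Longrightarrow> s < 1 \<Longrightarrow> 0 \<le> Cup N s"
proof -
  assume s: "0 < s" "s < 1"
  have "2 powr (-s) < 1" "2 powr (s - 1) < 1" using s by (simp_all add: powr_less_one)
  then show ?thesis unfolding Cup_def by simp
qed

lemma frac_upper:
  assumes s: "0 < s" "s < \<sigma>" "\<sigma> < 1"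
  shows "frac_perimeter s (EE \<sigma> :: (real^'n) set) < \<infinity>"
proof -
  define N where "N = CARD('n)"
  define K where "K x y = ennreal (norm (x - y) powr (-(real N + s)))" for x y :: "real^'n"
  have "\<forall>k. \<exists>h. h \<in> borel_measurable lebesgue \<and>
     (\<forall>x. (\<integral>\<^sup>+y. indicator (Qk \<sigma> k) x * indicator (- Qk \<sigma> k) y * K x y \<partial>lebesgue) \<le> h x) \<and>
     (\<integral>\<^sup>+x. h x \<partial>lebesgue) \<le> ennreal (Cup N s * rr \<sigma> N k powr (real N - s))"
  proof
    fix k
    show "\<exists>h. h \<in> borel_measurable lebesgue \<and>
     (\<forall>x. (\<integral>\<^sup>+y. indicator (Qk \<sigma> k) x * indicator (- Qk \<sigma> k) y * K x y \<partial>lebesgue) \<le> h x) \<and>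
     (\<integral>\<^sup>+x. h x \<partial>lebesgue) \<le> ennreal (Cup N s * rr \<sigma> N k powr (real N - s))"
      using cube_bound[where a="ctr k :: real^'n" and r="rr \<sigma> N k" and s=s] rr_pos[of \<sigma> N k] s
      unfolding Qk_def K_def N_def by auto
  qed
  from choice[OF this] obtain H where H0: "\<forall>k. H k \<in> borel_measurable lebesgue \<and>
     (\<forall>x. (\<integral>\<^sup>+y. indicator (Qk \<sigma> k) x * indicator (- Qk \<sigma> k) y * K x y \<partial>lebesgue) \<le> H k x) \<and>
     (\<integral>\<^sup>+x. H k x \<partial>lebesgue) \<le> ennreal (Cup N s * rr \<sigma> N k powr (real N - s))" by blast
  have H: "\<And>k. H k \<in> borel_measurable lebesgue"
    "\<And>k x. (\<integral>\<^sup>+y. indicator (Qk \<sigma> k) x * indicator (- Qk \<sigma> k) y * K x y \<partial>lebesgue) \<le> H k x"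
    "\<And>k. (\<integral>\<^sup>+x. H k x \<partial>lebesgue) \<le> ennreal (Cup N s * rr \<sigma> N k powr (real N - s))"
    using H0 by blast+
  have pt: "indicator (EE \<sigma>) x * indicator (- EE \<sigma>) y * K x y \<le> (\<Sum>k. indicator (Qk \<sigma> k) x * indicator (- Qk \<sigma> k) y * K x y)" for x y
  proof (cases "x \<in> EE \<sigma> \<and> y \<notin> EE \<sigma>")
    case True
    then obtain k where k: "x \<in> Qk \<sigma> k" "y \<notin> Qk \<sigma> k" unfolding EE_def by blast
    have "(\<Sum>j\<in>{k}. indicator (Qk \<sigma> j) x * indicator (- Qk \<sigma> j) y * K x y) \<le> (\<Sum>j. indicator (Qk \<sigma> j) x * indicator (- Qk \<sigma> j) y * K x y)"
      by (rule sum_le_suminf) auto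
    then show ?thesis using True k by simp
  next
    case False
    then have z: "indicator (EE \<sigma>) x * indicator (- EE \<sigma>) y * K x y = 0" by (auto split: split_indicator)
    show ?thesis by (subst z) (rule zero_le)
  qed
  have "frac_perimeter s (EE \<sigma> :: (real^'n) set) = (\<integral>\<^sup>+x. \<integral>\<^sup>+y. indicator (EE \<sigma>) x * indicator (- EE \<sigma>) y * K x y \<partial>lebesgue \<partial>lebesgue)"
    unfolding frac_perimeter_def K_def N_def ..
  also have "\<dots> \<le> (\<integral>\<^sup>+x. (\<Sum>k. H k x) \<partial>lebesgue)"
  proof (rule nn_integral_mono)
    fix x :: "real^'n"
    have "(\<integral>\<^sup>+y. indicator (EE \<sigma>) x * indicator (- EE \<sigma>) y * K x y \<partial>lebesgue) \<le>
        (\<integral>\<^sup>+y. (\<Sum>k. indicator (Qk \<sigma> k) x * indicator (- Qk \<sigma> k) y * K x y) \<partial>lebesgue)"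
      by (intro nn_integral_mono pt)
    also have "\<dots> = (\<Sum>k. \<integral>\<^sup>+y. indicator (Qk \<sigma> k) x * indicator (- Qk \<sigma> k) y * K x y \<partial>lebesgue)"
      unfolding K_def Qk_def by (rule nn_integral_suminf) (rule meas_term)
    also have "\<dots> \<le> (\<Sum>k. H k x)" by (intro suminf_le H(2)) auto
    finally show "(\<integral>\<^sup>+y. indicator (EE \<sigma>) x * indicator (- EE \<sigma>) y * K x y \<partial>lebesgue) \<le> (\<Sum>k. H k x)" .
  qed
  also have "\<dots> = (\<Sum>k. \<integral>\<^sup>+x. H k x \<partial>lebesgue)" by (rule nn_integral_suminf) (simp add: H(1))
  also have "\<dots> \<le> (\<Sum>k. ennreal (Cup N s * rr \<sigma> N k powr (real N - s)))" by (intro suminf_le H(3)) auto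
  also have "\<dots> < \<infinity>"
  proof -
    have "1 \<le> real N" by (simp add: N_def Suc_leI)
    then have N: "0 < real N - \<sigma>" using s by linarith
    have "summable (\<lambda>k. Cup N s * rr \<sigma> N k powr (real N - s))"
      using rr_summable_iff[OF N, of s] s by (intro summable_mult) simp
    then have "(\<Sum>k. ennreal (Cup N s * rr \<sigma> N k powr (real N - s))) \<noteq> top"
      using Cup_nonneg[of s N] s by (intro ennreal_suminf_neq_top) auto
    then show ?thesis by (simp add: less_top)
  qed
  finally show ?thesis .
qed



lemma lower_alg:
  assumes "0 < r" "0 < M"
  shows "(M * r) powr (-(real N + s)) * r^N * r^N = M powr (-(real N + s)) * r powr (real N - s)"
proof -
  have "(M * r) powr (-(real N + s)) * r^N * r^N = M powr (-(real N + s)) * (r powr (-(real N + s)) * r powr N * r powr N)"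
    using assms by (simp add: powr_mult powr_realpow)
  also have "r powr (-(real N + s)) * r powr N * r powr N = r powr (real N - s)"
    by (simp add: powr_add[symmetric])
  finally show ?thesis .
qed

lemma frac_lower:
  assumes s: "\<sigma> \<le> s" "s < 1" "0 < \<sigma>"
  shows "frac_perimeter s (EE \<sigma> :: (real^'n) set) = \<infinity>"
proof -
  define N where "N = CARD('n)"
  have N0: "0 < N" by (simp add: N_def)
  have s1: "\<sigma> < 1" using s by simp
  define K where "K x y = ennreal (norm (x - y) powr (-(real N + s)))" for x y :: "real^'n"
  define ck where "ck k = (2 * real N * rr \<sigma> N k) powr (-(real N + s))" for k
  have pt: "(\<Sum>k. (ennreal (ck k) * indicator (Qk \<sigma> k) x) * indicator (Qk' \<sigma> k) y) \<le> indicator (EE \<sigma>) x * indicator (- EE \<sigma>) y * K x y" for x y :: "real^'n"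
  proof (cases "x \<in> EE \<sigma>")
    case True
    then obtain k where k: "x \<in> Qk \<sigma> k" unfolding EE_def by blast
    have "(\<Sum>j. (ennreal (ck j) * indicator (Qk \<sigma> j) x) * indicator (Qk' \<sigma> j) y) = (\<Sum>j\<in>{k}. (ennreal (ck j) * indicator (Qk \<sigma> j) x) * indicator (Qk' \<sigma> j) y)"
    proof (rule suminf_finite)
      show "j \<notin> {k} \<Longrightarrow> (ennreal (ck j) * indicator (Qk \<sigma> j) x) * indicator (Qk' \<sigma> j) y = 0" for j
      proof -
        assume "j \<notin> {k}"
        then have "x \<notin> Qk \<sigma> j" using Qk_disj[OF s1, of j k] k by auto
        then show ?thesis by simp
      qed
    qed simp
    also have "\<dots> \<le> indicator (EE \<sigma>) x * indicator (- EE \<sigma>) y * K x y"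
    proof (cases "y \<in> Qk' \<sigma> k")
      case True
      have yE: "y \<notin> EE \<sigma>" using Qk'_notin[OF s1 True] .
      have "x \<noteq> y" using yE \<open>x \<in> EE \<sigma>\<close> by auto
      then have pos: "0 < norm (x - y)" by simp
      have "norm (x - y) \<le> 2 * real N * rr \<sigma> N k" using Qk_Qk'_dist[OF k True] by (simp add: N_def)
      then have "ck k \<le> norm (x - y) powr (-(real N + s))"
        unfolding ck_def using pos s by (intro powr_mono2') auto
      then show ?thesis using k True yE \<open>x \<in> EE \<sigma>\<close> by (simp add: K_def ennreal_leI)
    qed (use k in simp)
    finally show ?thesis .
  qed (auto simp: EE_def)
  have mQ: "Qk \<sigma> k \<in> sets lebesgue" "Qk' \<sigma> k \<in> sets lebesgue" for k
    unfolding Qk_def Qk'_def by simp_all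
  note [measurable] = mQ
  have "(\<Sum>k. ennreal ((2 * real N) powr (-(real N + s)) * rr \<sigma> N k powr (real N - s))) \<le> frac_perimeter s (EE \<sigma> :: (real^'n) set)"
  proof -
    have "(\<Sum>k. ennreal ((2 * real N) powr (-(real N + s)) * rr \<sigma> N k powr (real N - s))) =
        (\<Sum>k. (ennreal (ck k) * emeasure lebesgue (Qk' \<sigma> k :: (real^'n) set)) * emeasure lebesgue (Qk \<sigma> k :: (real^'n) set))"
    proof (rule suminf_cong)
      fix k
      have "ck k * rr \<sigma> N k ^ N * rr \<sigma> N k ^ N = (2 * real N) powr (-(real N + s)) * rr \<sigma> N k powr (real N - s)"
        unfolding ck_def using lower_alg[OF rr_pos, of "2 * real N" \<sigma> N k N s] N0 by (simp add: mult.assoc)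
      moreover have "0 \<le> ck k" unfolding ck_def by simp
      ultimately show "ennreal ((2 * real N) powr (-(real N + s)) * rr \<sigma> N k powr (real N - s)) =
          (ennreal (ck k) * emeasure lebesgue (Qk' \<sigma> k :: (real^'n) set)) * emeasure lebesgue (Qk \<sigma> k :: (real^'n) set)"
        using rr_pos[of \<sigma> N k] unfolding Qk_measure N_def[symmetric]
        by (simp add: ennreal_mult'[symmetric] mult.assoc)
    qed
    also have "\<dots> = (\<Sum>k. \<integral>\<^sup>+(x::real^'n). (ennreal (ck k) * emeasure lebesgue (Qk' \<sigma> k :: (real^'n) set)) * indicator (Qk \<sigma> k) x \<partial>lebesgue)"
      by (intro suminf_cong) (simp add: nn_integral_cmult_indicator mQ)
    also have "\<dots> = (\<integral>\<^sup>+(x::real^'n). (\<Sum>k. (ennreal (ck k) * emeasure lebesgue (Qk' \<sigma> k :: (real^'n) set)) * indicator (Qk \<sigma> k) x) \<partial>lebesgue)"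
      by (rule nn_integral_suminf[symmetric]) measurable
    also have "\<dots> = (\<integral>\<^sup>+(x::real^'n). \<integral>\<^sup>+(y::real^'n). (\<Sum>k. (ennreal (ck k) * indicator (Qk \<sigma> k) x) * indicator (Qk' \<sigma> k) y) \<partial>lebesgue \<partial>lebesgue)"
    proof (rule nn_integral_cong)
      fix x :: "real^'n"
      have "(\<integral>\<^sup>+(y::real^'n). (\<Sum>k. (ennreal (ck k) * indicator (Qk \<sigma> k) x) * indicator (Qk' \<sigma> k) y) \<partial>lebesgue)
        = (\<Sum>k. \<integral>\<^sup>+(y::real^'n). (ennreal (ck k) * indicator (Qk \<sigma> k) x) * indicator (Qk' \<sigma> k) y \<partial>lebesgue)"
        by (rule nn_integral_suminf) measurable
      also have "\<dots> = (\<Sum>k. (ennreal (ck k) * indicator (Qk \<sigma> k) x) * emeasure lebesgue (Qk' \<sigma> k :: (real^'n) set))"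
        by (intro suminf_cong) (simp add: nn_integral_cmult_indicator mQ)
      also have "\<dots> = (\<Sum>k. (ennreal (ck k) * emeasure lebesgue (Qk' \<sigma> k :: (real^'n) set)) * indicator (Qk \<sigma> k) x)"
        by (intro suminf_cong) (simp only: mult_ac)
      finally show "(\<Sum>k. (ennreal (ck k) * emeasure lebesgue (Qk' \<sigma> k :: (real^'n) set)) * indicator (Qk \<sigma> k) x) =
         (\<integral>\<^sup>+(y::real^'n). (\<Sum>k. (ennreal (ck k) * indicator (Qk \<sigma> k) x) * indicator (Qk' \<sigma> k) y) \<partial>lebesgue)" by (rule sym)
    qed
    also have "\<dots> \<le> (\<integral>\<^sup>+(x::real^'n). \<integral>\<^sup>+y. indicator (EE \<sigma>) x * indicator (- EE \<sigma>) y * K x y \<partial>lebesgue \<partial>lebesgue)"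
      by (intro nn_integral_mono pt)
    also have "\<dots> = frac_perimeter s (EE \<sigma> :: (real^'n) set)"
      unfolding frac_perimeter_def K_def N_def ..
    finally show ?thesis .
  qed
  moreover have "(\<Sum>k. ennreal ((2 * real N) powr (-(real N + s)) * rr \<sigma> N k powr (real N - s))) = top"
  proof (rule summable_iff_suminf_neq_top)
    show "0 \<le> (2 * real N) powr (-(real N + s)) * rr \<sigma> N k powr (real N - s)" for k by simp
    have N: "0 < real N - \<sigma>" using s N0 by linarith
    show "\<not> summable (\<lambda>k. (2 * real N) powr (-(real N + s)) * rr \<sigma> N k powr (real N - s))"
    proof
      assume "summable (\<lambda>k. (2 * real N) powr (-(real N + s)) * rr \<sigma> N k powr (real N - s))"
      from summable_mult[OF this, of "inverse ((2 * real N) powr (-(real N + s)))"]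
      have "summable (\<lambda>k. rr \<sigma> N k powr (real N - s))" using N0 by (simp add: mult.assoc[symmetric])
      then show False using rr_summable_iff[OF N, of s] s by simp
    qed
  qed
  ultimately show ?thesis by (simp add: top_unique)
qed



lemma lborel_translate_integral:
  fixes f :: "real^'n \<Rightarrow> real"
  assumes [measurable]: "f \<in> borel_measurable borel"
  shows "(\<integral>x. f (c + x) \<partial>lborel) = (\<integral>x. f x \<partial>lborel)"
proof -
  have "(\<integral>x. f x \<partial>lborel) = (\<integral>x. f x \<partial>(distr lborel borel ((+) c)))"
    by (simp add: lborel_distr_plus)
  also have "\<dots> = (\<integral>x. f (c + x) \<partial>lborel)"
    by (rule integral_distr) auto
  finally show ?thesis by simp
qed

lemma lborel_translate_emeasure:
  fixes F :: "(real^'n) set"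
  assumes [measurable]: "F \<in> sets borel"
  shows "emeasure lborel {y. y - c \<in> F} = emeasure lborel F"
proof -
  have m: "{y. y - c \<in> F} \<in> sets borel" by measurable
  have "emeasure lborel {y. y - c \<in> F} = emeasure (distr lborel borel ((+) c)) {y. y - c \<in> F}"
    by (simp add: lborel_distr_plus)
  also have "\<dots> = emeasure lborel (((+) c) -` {y. y - c \<in> F} \<inter> space lborel)"
    by (rule emeasure_distr) (auto simp: m)
  also have "((+) c) -` {y. y - c \<in> F} \<inter> space lborel = F" by auto
  finally show ?thesis .
qed

lemma deriv_shift_all:
  fixes g G :: "real^'n \<Rightarrow> real"
  assumes der: "\<And>x. ((\<lambda>t. g (x + t *\<^sub>R v)) has_real_derivative G x) (at 0)"
  shows "((\<lambda>u. g (x + u *\<^sub>R v)) has_real_derivative G (x + t *\<^sub>R v)) (at t)"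
proof -
  have "((\<lambda>u. g (x + t *\<^sub>R v + u *\<^sub>R v)) has_real_derivative G (x + t *\<^sub>R v)) (at 0)"
    by (rule der)
  moreover have "(\<lambda>u. g (x + t *\<^sub>R v + u *\<^sub>R v)) = (\<lambda>u. (\<lambda>u. g (x + u *\<^sub>R v)) (u + t))"
    by (simp add: scaleR_add_left add_ac)
  ultimately have "((\<lambda>u. (\<lambda>u. g (x + u *\<^sub>R v)) (u + t)) has_real_derivative G (x + t *\<^sub>R v)) (at 0)" by simp
  then show ?thesis using DERIV_shift[of "\<lambda>u. g (x + u *\<^sub>R v)" "G (x + t *\<^sub>R v)" 0 t] by simp
qed

lemma diff_quot_bound:
  fixes g G :: "real^'n \<Rightarrow> real"
  assumes der: "\<And>x. ((\<lambda>t. g (x + t *\<^sub>R v)) has_real_derivative G x) (at 0)"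
    and GM: "\<And>x. \<bar>G x\<bar> \<le> M" and h: "0 < h"
  shows "\<bar>(g (x + h *\<^sub>R v) - g x) / h\<bar> \<le> M"
proof -
  obtain z where "0 < z" "z < h" "g (x + h *\<^sub>R v) - g (x + 0 *\<^sub>R v) = (h - 0) * G (x + z *\<^sub>R v)"
    using MVT2[OF h, of "\<lambda>u. g (x + u *\<^sub>R v)" "\<lambda>t. G (x + t *\<^sub>R v)"] deriv_shift_all[OF der] by blast
  then have "(g (x + h *\<^sub>R v) - g x) / h = G (x + z *\<^sub>R v)" using h by simp
  then show ?thesis using GM by simp
qed

lemma diff_quot_lim:
  fixes g G :: "real^'n \<Rightarrow> real"
  assumes der: "((\<lambda>t. g (x + t *\<^sub>R v)) has_real_derivative G x) (at 0)"
  shows "(\<lambda>m. (g (x + inverse (real (Suc m)) *\<^sub>R v) - g x) / inverse (real (Suc m))) \<longlonglongrightarrow> G x"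
proof -
  have l: "((\<lambda>t. (g (x + t *\<^sub>R v) - g x) / t) \<longlongrightarrow> G x) (at 0)"
    using der unfolding has_field_derivative_iff by simp
  have f: "filterlim (\<lambda>m. inverse (real (Suc m))) (at 0) sequentially"
    by (rule filterlim_atI[OF LIMSEQ_inverse_real_of_nat]) simp
  show ?thesis by (rule filterlim_compose[OF l f])
qed



lemma partial_int_bound:
  fixes g G :: "real^'n \<Rightarrow> real" and v :: "real^'n" and F :: "(real^'n) set"
  assumes F[measurable]: "F \<in> sets borel" and Ffin: "emeasure lborel F < \<infinity>"
    and gc: "continuous_on UNIV g" and g1: "\<And>x. \<bar>g x\<bar> \<le> 1"
    and Gc: "continuous_on UNIV G" and GM: "\<And>x. \<bar>G x\<bar> \<le> M"
    and der: "\<And>x. ((\<lambda>t. g (x + t *\<^sub>R v)) has_real_derivative G x) (at 0)"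
    and sd: "\<And>h. 0 < h \<Longrightarrow> emeasure lborel ({y. y - h *\<^sub>R v \<in> F} - F) + emeasure lborel (F - {y. y - h *\<^sub>R v \<in> F}) \<le> ennreal (L * h)"
    and L0: "0 \<le> L"
  shows "(\<integral>x. indicator F x * G x \<partial>lborel) \<le> L"
proof -
  have gm[measurable]: "g \<in> borel_measurable borel" by (rule borel_measurable_continuous_onI[OF gc])
  have Gm[measurable]: "G \<in> borel_measurable borel" by (rule borel_measurable_continuous_onI[OF Gc])
  define T where "T h = {y. y - h *\<^sub>R v \<in> F}" for h :: real
  have Tm[measurable]: "T h \<in> sets borel" for h unfolding T_def by measurable
  have Tfin: "emeasure lborel (T h) < \<infinity>" for h
    unfolding T_def using lborel_translate_emeasure[OF F, of "h *\<^sub>R v"] Ffin by simp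
  have intA: "integrable lborel (\<lambda>x. indicator A x * g x)" if [measurable]: "A \<in> sets borel" and "emeasure lborel A < \<infinity>" for A
  proof (rule Bochner_Integration.integrable_bound[where f="indicator A"])
    show "integrable lborel (indicator A :: real^'n \<Rightarrow> real)" using that by simp
    show "(\<lambda>x. indicator A x * g x) \<in> borel_measurable lborel" by measurable
    show "AE x in lborel. norm (indicator A x * g x) \<le> norm (indicator A x :: real)"
      using g1 by (intro AE_I2) (auto split: split_indicator)
  qed
  define hh where "hh m = inverse (real (Suc m))" for m :: nat
  have hh: "0 < hh m" for m by (simp add: hh_def)
  define s where "s m x = indicator F x * ((g (x + hh m *\<^sub>R v) - g x) / hh m)" for m x
  have sm[measurable]: "s m \<in> borel_measurable lborel" for m unfolding s_def by measurable
  have key: "integral\<^sup>L lborel (s m) \<le> L" for m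
  proof -
    define h where "h = hh m"
    have h: "0 < h" by (simp add: h_def hh)
    have i1: "integrable lborel (\<lambda>x. indicator F x * g (x + h *\<^sub>R v))"
    proof (rule Bochner_Integration.integrable_bound[where f="indicator F"])
        show "integrable lborel (indicator F :: real^'n \<Rightarrow> real)" using Ffin by simp
      show "(\<lambda>x. indicator F x * g (x + h *\<^sub>R v)) \<in> borel_measurable lborel" by measurable
      show "AE x in lborel. norm (indicator F x * g (x + h *\<^sub>R v)) \<le> norm (indicator F x :: real)"
        using g1 by (intro AE_I2) (auto split: split_indicator)
    qed
    have i2: "integrable lborel (\<lambda>x. indicator F x * g x)" by (rule intA[OF F Ffin])
    have i3: "integrable lborel (\<lambda>x. indicator (T h) x * g x)" by (rule intA[OF Tm Tfin])
    have tr: "(\<integral>x. indicator F x * g (x + h *\<^sub>R v) \<partial>lborel) = (\<integral>x. indicator (T h) x * g x \<partial>lborel)"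
    proof -
      have "(\<integral>x. indicator (T h) x * g x \<partial>lborel) = (\<integral>x. (\<lambda>y. indicator (T h) y * g y) (h *\<^sub>R v + x) \<partial>lborel)"
        by (rule lborel_translate_integral[symmetric]) measurable
      also have "\<dots> = (\<integral>x. indicator F x * g (x + h *\<^sub>R v) \<partial>lborel)"
        by (simp add: T_def add.commute indicator_def)
      finally show ?thesis by simp
    qed
    have "integral\<^sup>L lborel (s m) = ((\<integral>x. indicator F x * g (x + h *\<^sub>R v) \<partial>lborel) - (\<integral>x. indicator F x * g x \<partial>lborel)) / h"
    proof -
      have "integral\<^sup>L lborel (s m) = (\<integral>x. (indicator F x * g (x + h *\<^sub>R v) - indicator F x * g x) / h \<partial>lborel)"
        unfolding s_def h_def by (simp add: algebra_simps)
      also have "\<dots> = (\<integral>x. (indicator F x * g (x + h *\<^sub>R v) - indicator F x * g x) \<partial>lborel) / h"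
        by (rule integral_divide_zero)
      also have "\<dots> = ((\<integral>x. indicator F x * g (x + h *\<^sub>R v) \<partial>lborel) - (\<integral>x. indicator F x * g x \<partial>lborel)) / h"
        by (subst Bochner_Integration.integral_diff[OF i1 i2]) simp
      finally show ?thesis .
    qed
    also have "\<dots> = (\<integral>x. (indicator (T h) x - indicator F x) * g x \<partial>lborel) / h"
      unfolding tr by (subst Bochner_Integration.integral_diff[OF i3 i2, symmetric]) (simp add: algebra_simps)
    also have "\<dots> \<le> (\<integral>x. indicator (T h - F) x + indicator (F - T h) x \<partial>lborel) / h"
    proof (rule divide_right_mono[OF _ less_imp_le[OF h]], rule integral_mono)
      show "integrable lborel (\<lambda>x. (indicator (T h) x - indicator F x) * g x)"
        using Bochner_Integration.integrable_diff[OF i3 i2] by (simp add: algebra_simps)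
      have f1: "emeasure lborel (T h - F) < \<infinity>" using Tfin by (rule le_less_trans[rotated]) (rule emeasure_mono, auto)
      have f2: "emeasure lborel (F - T h) < \<infinity>" using Ffin by (rule le_less_trans[rotated]) (rule emeasure_mono, auto)
      show "integrable lborel (\<lambda>x. indicator (T h - F) x + indicator (F - T h) x :: real)"
        using f1 f2 by (intro Bochner_Integration.integrable_add integrable_real_indicator) auto
      fix x
      show "(indicator (T h) x - indicator F x) * g x \<le> indicator (T h - F) x + indicator (F - T h) x"
        using g1[of x] by (auto simp: indicator_def abs_le_iff)
    qed
    also have "\<dots> \<le> L"
    proof -
      have f1: "emeasure lborel (T h - F) < \<infinity>" using Tfin by (rule le_less_trans[rotated]) (rule emeasure_mono, auto)
      have f2: "emeasure lborel (F - T h) < \<infinity>" using Ffin by (rule le_less_trans[rotated]) (rule emeasure_mono, auto)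
      have "(\<integral>x. indicator (T h - F) x + indicator (F - T h) x \<partial>lborel) = measure lborel (T h - F) + measure lborel (F - T h)"
        using f1 f2 by (subst Bochner_Integration.integral_add) auto
      moreover have "ennreal (measure lborel (T h - F) + measure lborel (F - T h)) \<le> ennreal (L * h)"
        using sd[OF h] f1 f2 by (simp add: T_def emeasure_eq_ennreal_measure ennreal_plus[symmetric] del: ennreal_plus)
      moreover have "0 \<le> measure lborel (T h - F) + measure lborel (F - T h)" by simp
      ultimately have "(\<integral>x. indicator (T h - F) x + indicator (F - T h) x \<partial>lborel) \<le> L * h"
        using L0 h by (simp add: ennreal_le_iff del: ennreal_plus)
      then show ?thesis using h by (simp add: divide_le_eq)
    qed
    finally show ?thesis .
  qed
  have lim: "(\<lambda>m. integral\<^sup>L lborel (s m)) \<longlonglongrightarrow> (\<integral>x. indicator F x * G x \<partial>lborel)"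
  proof (rule integral_dominated_convergence[where w="\<lambda>x. indicator F x * M"])
    show "(\<lambda>x. indicator F x * G x) \<in> borel_measurable lborel" by measurable
    show "integrable lborel (\<lambda>x. indicator F x * M)" using Ffin by simp
    show "AE x in lborel. (\<lambda>m. s m x) \<longlonglongrightarrow> indicator F x * G x"
    proof (rule AE_I2)
      fix x
      show "(\<lambda>m. s m x) \<longlonglongrightarrow> indicator F x * G x"
        unfolding s_def hh_def by (intro tendsto_mult tendsto_const diff_quot_lim der)
    qed
    show "AE x in lborel. norm (s m x) \<le> indicator F x * M" for m
    proof (rule AE_I2)
      fix x
      show "norm (s m x) \<le> indicator F x * M"
        using diff_quot_bound[OF der GM hh[of m], of x] by (simp add: s_def indicator_def)
    qed
  qed (rule sm)
  show ?thesis by (rule LIMSEQ_le_const2[OF lim]) (use key in auto)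
qed



lemma box_shift_bound:
  fixes a :: "real^'n"
  assumes r: "0 < r" "r \<le> 1" and h: "0 < h"
  shows "emeasure lborel ({y. y - h *\<^sub>R axis i 1 \<in> box a (a + vec r)} - box a (a + vec r)) \<le> ennreal h"
    and "emeasure lborel (box a (a + vec r) - {y. y - h *\<^sub>R axis i 1 \<in> box a (a + vec r)}) \<le> ennreal h"
proof -
  have pb: "(\<Prod>k\<in>UNIV. if k = i then h else r) \<le> h"
  proof -
    have "(\<Prod>k\<in>UNIV. if k = i then h else r) = h * r^(CARD('n) - 1)" by (rule prod_slab)
    also have "\<dots> \<le> h * 1" using r h by (intro mult_left_mono power_le_one) auto
    finally show ?thesis by simp
  qed
  define u1 :: "real^'n" where "u1 = (\<chi> j. if j = i then a$j + r else a$j)"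
  define w1 :: "real^'n" where "w1 = (\<chi> j. if j = i then a$j + r + h else a$j + r)"
  define w2 :: "real^'n" where "w2 = (\<chi> j. if j = i then a$j + h else a$j + r)"
  have "{y. y - h *\<^sub>R axis i 1 \<in> box a (a + vec r)} - box a (a + vec r) \<subseteq> cbox u1 w1"
  proof
    fix y assume y: "y \<in> {y. y - h *\<^sub>R axis i 1 \<in> box a (a + vec r)} - box a (a + vec r)"
    then have A: "\<forall>j. a$j < y$j - h * (if j = i then 1 else 0) \<and> y$j - h * (if j = i then 1 else 0) < a$j + r"
      by (simp add: mem_box_cart axis_def)
    from y obtain j where nj: "\<not> (a$j < y$j \<and> y$j < a$j + r)" by (auto simp: mem_box_cart)
    have Aj: "a$j < y$j - h * (if j = i then 1 else 0) \<and> y$j - h * (if j = i then 1 else 0) < a$j + r"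
      using A by blast
    have ji: "j = i" using Aj nj h by (cases "j = i") auto
    have yi: "a$i + r \<le> y$i" using Aj nj h ji by auto
    show "y \<in> cbox u1 w1" unfolding mem_box_cart u1_def w1_def
    proof
      fix k
      have Ak: "a$k < y$k - h * (if k = i then 1 else 0) \<and> y$k - h * (if k = i then 1 else 0) < a$k + r"
        using A by blast
      show "(\<chi> j. if j = i then a$j + r else a$j) $ k \<le> y$k \<and> y$k \<le> (\<chi> j. if j = i then a$j + r + h else a$j + r) $ k"
        using Ak yi by (cases "k = i") auto
    qed
  qed
  then have "emeasure lborel ({y. y - h *\<^sub>R axis i 1 \<in> box a (a + vec r)} - box a (a + vec r)) \<le> emeasure lborel (cbox u1 w1)"
    by (rule emeasure_mono) simp
  also have "emeasure lborel (cbox u1 w1) = ennreal (\<Prod>k\<in>UNIV. if k = i then h else r)"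
    using box_measure_cart(2)[of u1 w1] r h by (auto simp: u1_def w1_def intro!: arg_cong[where f=ennreal] prod.cong)
  also have "\<dots> \<le> ennreal h" using pb by (rule ennreal_leI)
  finally show "emeasure lborel ({y. y - h *\<^sub>R axis i 1 \<in> box a (a + vec r)} - box a (a + vec r)) \<le> ennreal h" .
  have "box a (a + vec r) - {y. y - h *\<^sub>R axis i 1 \<in> box a (a + vec r)} \<subseteq> cbox a w2"
  proof
    fix y assume y: "y \<in> box a (a + vec r) - {y. y - h *\<^sub>R axis i 1 \<in> box a (a + vec r)}"
    then have A: "\<forall>j. a$j < y$j \<and> y$j < a$j + r" by (simp add: mem_box_cart)
    from y obtain j where "\<not> (a$j < y$j - h * (if j = i then 1 else 0) \<and> y$j - h * (if j = i then 1 else 0) < a$j + r)"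
      by (auto simp: mem_box_cart axis_def)
    then have nj: "\<not> (a$j < y$j - h * (if j = i then 1 else 0) \<and> y$j - h * (if j = i then 1 else 0) < a$j + r)" .
    have Aj: "a$j < y$j \<and> y$j < a$j + r" using A by blast
    have ji: "j = i" using Aj nj h by (cases "j = i") auto
    have yi: "y$i \<le> a$i + h" using Aj nj h ji by auto
    show "y \<in> cbox a w2" unfolding mem_box_cart w2_def
    proof
      fix k
      have Ak: "a$k < y$k \<and> y$k < a$k + r" using A by blast
      show "a $ k \<le> y$k \<and> y$k \<le> (\<chi> j. if j = i then a$j + h else a$j + r) $ k"
        using Ak yi by (cases "k = i") auto
    qed
  qed
  then have "emeasure lborel (box a (a + vec r) - {y. y - h *\<^sub>R axis i 1 \<in> box a (a + vec r)}) \<le> emeasure lborel (cbox a w2)"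
    by (rule emeasure_mono) simp
  also have "emeasure lborel (cbox a w2) = ennreal (\<Prod>k\<in>UNIV. if k = i then h else r)"
    using box_measure_cart(2)[of a w2] r h by (auto simp: w2_def intro!: arg_cong[where f=ennreal] prod.cong)
  also have "\<dots> \<le> ennreal h" using pb by (rule ennreal_leI)
  finally show "emeasure lborel (box a (a + vec r) - {y. y - h *\<^sub>R axis i 1 \<in> box a (a + vec r)}) \<le> ennreal h" .
qed



lemma C1_facts:
  fixes \<phi> :: "real^'n \<Rightarrow> real^'n"
  assumes Dd: "\<And>x. (\<phi> has_derivative D x) (at x)"
    and Dc: "\<And>v. continuous_on UNIV (\<lambda>x. D x v)"
    and comp: "compact (closure {x. \<phi> x \<noteq> 0})"
  shows C1_zero: "x \<notin> closure {x. \<phi> x \<noteq> 0} \<Longrightarrow> D x w = 0"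
    and C1_div: "divergence \<phi> x = (\<Sum>i\<in>UNIV. D x (axis i 1) $ i)"
    and C1_line: "((\<lambda>t. \<phi> (x + t *\<^sub>R axis i 1) $ i) has_real_derivative (D x (axis i 1) $ i)) (at 0)"
    and C1_bnd: "\<exists>M. \<forall>x. \<bar>D x w $ i\<bar> \<le> M"
    and C1_cont: "continuous_on UNIV \<phi>"
proof -
  define S where "S = closure {x. \<phi> x \<noteq> 0}"
  have zero: "D y = (\<lambda>_. 0)" if y: "y \<notin> S" for y
  proof -
    have "((\<lambda>_. 0 :: real^'n) has_derivative (\<lambda>_. 0)) (at y)" by simp
    then have "(\<phi> has_derivative (\<lambda>_. 0)) (at y)"
    proof (rule has_derivative_transform_within_open)
      show "open (- S)" unfolding S_def by (rule open_Compl) simp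
      show "y \<in> - S" using y by simp
      fix z assume "z \<in> - S"
      then have "z \<notin> {x. \<phi> x \<noteq> 0}" using closure_subset[of "{x. \<phi> x \<noteq> 0}"] by (auto simp: S_def)
      then show "0 = \<phi> z" by simp
    qed
    then show ?thesis using has_derivative_unique[OF Dd[of y]] by blast
  qed
  then show "x \<notin> closure {x. \<phi> x \<noteq> 0} \<Longrightarrow> D x w = 0" by (simp add: S_def)
  show "divergence \<phi> x = (\<Sum>i\<in>UNIV. D x (axis i 1) $ i)"
    unfolding divergence_def using frechet_derivative_at[OF Dd[of x]] by simp
  have lin: "linear (D x)" using Dd[of x] has_derivative_linear by blast
  have "((\<lambda>t. x + t *\<^sub>R axis i 1) has_derivative (\<lambda>t. t *\<^sub>R axis i 1)) (at 0)"
    by (auto intro!: derivative_eq_intros)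
  from has_derivative_compose[OF this, of \<phi> "D x"] Dd[of x]
  have "((\<lambda>t. \<phi> (x + t *\<^sub>R axis i 1)) has_derivative (\<lambda>t. D x (t *\<^sub>R axis i 1))) (at 0)" by simp
  from bounded_linear.has_derivative[OF bounded_linear_vec_nth[of i] this]
  have "((\<lambda>t. \<phi> (x + t *\<^sub>R axis i 1) $ i) has_derivative (\<lambda>t. D x (t *\<^sub>R axis i 1) $ i)) (at 0)" .
  moreover have "(\<lambda>t. D x (t *\<^sub>R axis i 1) $ i) = (*) (D x (axis i 1) $ i)"
    using lin by (auto simp: linear_scale mult.commute)
  ultimately show "((\<lambda>t. \<phi> (x + t *\<^sub>R axis i 1) $ i) has_real_derivative (D x (axis i 1) $ i)) (at 0)"
    by (simp add: has_field_derivative_def)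
  have cc: "continuous_on UNIV (\<lambda>x. D x w $ i)" by (intro continuous_on_component Dc)
  have "compact ((\<lambda>x. D x w $ i) ` S)"
    using comp by (intro compact_continuous_image continuous_on_subset[OF cc]) (auto simp: S_def)
  then obtain a where a: "\<forall>y\<in>(\<lambda>x. D x w $ i) ` S. norm y \<le> a"
    using compact_imp_bounded bounded_iff by metis
  have "\<bar>D y w $ i\<bar> \<le> max a 0" for y
    using a zero[of y] by (cases "y \<in> S") auto
  then show "\<exists>M. \<forall>x. \<bar>D x w $ i\<bar> \<le> M" by blast
  show "continuous_on UNIV \<phi>"
    using Dd has_derivative_continuous continuous_at_imp_continuous_on by blast
qed



lemma cacc_bound:
  fixes \<phi> :: "real^'n \<Rightarrow> real^'n"
  assumes s: "0 < \<sigma>" "\<sigma> < 1"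
    and A: "C1c_field (ball 0 R) \<phi> \<and> (\<forall>x. norm (\<phi> x) \<le> 1)"
  shows "integral (EE \<sigma>) (divergence \<phi>) \<le> real CARD('n) * (2 * real (nat \<lceil>R\<rceil> + 1))"
proof -
  define K where "K = nat \<lceil>R\<rceil> + 1"
  define FK where "FK = (\<Union>k<K. Qk \<sigma> k :: (real^'n) set)"
  have N1: "1 \<le> CARD('n)" by (simp add: Suc_leI)
  have FKm[measurable]: "FK \<in> sets borel" unfolding FK_def Qk_def by (intro sets.finite_UN) auto
  have FKfin: "emeasure lborel FK < \<infinity>"
  proof -
    have "emeasure lborel FK \<le> (\<Sum>k<K. emeasure lborel (Qk \<sigma> k :: (real^'n) set))"
      unfolding FK_def by (rule emeasure_subadditive_finite) (auto simp: Qk_def)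
    also have "\<dots> < \<infinity>" by (simp add: Qk_def) (metis emeasure_lborel_box_finite infinity_ennreal_def)
    finally show ?thesis .
  qed
  have FKsd: "emeasure lborel ({y. y - h *\<^sub>R axis i 1 \<in> FK} - FK) + emeasure lborel (FK - {y. y - h *\<^sub>R axis i 1 \<in> FK}) \<le> ennreal (2 * real K * h)"
    if h: "0 < h" for h i
  proof -
    have e1: "emeasure lborel ({y. y - h *\<^sub>R axis i 1 \<in> FK} - FK) \<le> ennreal (real K * h)"
    proof -
      have "{y. y - h *\<^sub>R axis i 1 \<in> FK} - FK \<subseteq> (\<Union>k<K. {y. y - h *\<^sub>R axis i 1 \<in> Qk \<sigma> k} - Qk \<sigma> k)"
        unfolding FK_def by blast
      then have "emeasure lborel ({y. y - h *\<^sub>R axis i 1 \<in> FK} - FK) \<le> emeasure lborel (\<Union>k<K. {y. y - h *\<^sub>R axis i 1 \<in> Qk \<sigma> k} - Qk \<sigma> k)"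
        by (intro emeasure_mono) (auto simp: Qk_def intro!: sets.finite_UN)
      also have "\<dots> \<le> (\<Sum>k<K. emeasure lborel ({y. y - h *\<^sub>R axis i 1 \<in> Qk \<sigma> k} - Qk \<sigma> k))"
        by (rule emeasure_subadditive_finite) (auto simp: Qk_def)
      also have "\<dots> \<le> (\<Sum>k<K. ennreal h)"
        unfolding Qk_def by (intro sum_mono box_shift_bound(1) rr_pos rr_le1 s h N1)
      also have "\<dots> = ennreal (real K * h)" using h by (simp add: ennreal_of_nat_eq_real_of_nat ennreal_mult)
      finally show ?thesis .
    qed
    have e2: "emeasure lborel (FK - {y. y - h *\<^sub>R axis i 1 \<in> FK}) \<le> ennreal (real K * h)"
    proof -
      have "FK - {y. y - h *\<^sub>R axis i 1 \<in> FK} \<subseteq> (\<Union>k<K. Qk \<sigma> k - {y. y - h *\<^sub>R axis i 1 \<in> Qk \<sigma> k})"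
        unfolding FK_def by blast
      then have "emeasure lborel (FK - {y. y - h *\<^sub>R axis i 1 \<in> FK}) \<le> emeasure lborel (\<Union>k<K. Qk \<sigma> k - {y. y - h *\<^sub>R axis i 1 \<in> Qk \<sigma> k})"
        by (intro emeasure_mono) (auto simp: Qk_def intro!: sets.finite_UN)
      also have "\<dots> \<le> (\<Sum>k<K. emeasure lborel (Qk \<sigma> k - {y. y - h *\<^sub>R axis i 1 \<in> Qk \<sigma> k}))"
        by (rule emeasure_subadditive_finite) (auto simp: Qk_def)
      also have "\<dots> \<le> (\<Sum>k<K. ennreal h)"
        unfolding Qk_def by (intro sum_mono box_shift_bound(2) rr_pos rr_le1 s h N1)
      also have "\<dots> = ennreal (real K * h)" using h by (simp add: ennreal_of_nat_eq_real_of_nat ennreal_mult)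
      finally show ?thesis .
    qed
    have "ennreal (real K * h) + ennreal (real K * h) = ennreal (2 * real K * h)"
      using h by (simp add: ennreal_plus[symmetric] del: ennreal_plus)
    then show ?thesis using add_mono[OF e1 e2] by simp
  qed
    from A obtain D where Dd: "\<And>x. (\<phi> has_derivative D x) (at x)"
      and Dc: "\<And>v. continuous_on UNIV (\<lambda>x. D x v)"
      and comp: "compact (closure {x. \<phi> x \<noteq> 0})" and sub: "closure {x. \<phi> x \<noteq> 0} \<subseteq> ball 0 R"
      unfolding C1c_field_def by blast
    have n1: "\<And>x. norm (\<phi> x) \<le> 1" using A by blast
    define G where "G i x = D x (axis i 1) $ i" for i x
    have div: "divergence \<phi> x = (\<Sum>i\<in>UNIV. G i x)" for x
      unfolding G_def by (rule C1_div[OF Dd Dc comp])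
    have EF: "integral (EE \<sigma>) (divergence \<phi>) = integral FK (divergence \<phi>)"
    proof -
      have "(\<lambda>x. if x \<in> EE \<sigma> then divergence \<phi> x else 0) = (\<lambda>x. if x \<in> FK then divergence \<phi> x else 0)"
      proof
        fix x :: "real^'n"
        show "(if x \<in> EE \<sigma> then divergence \<phi> x else 0) = (if x \<in> FK then divergence \<phi> x else 0)"
        proof (cases "x \<in> EE \<sigma> \<and> x \<notin> FK")
          case True
          then obtain k where k1: "x \<in> Qk \<sigma> k" unfolding EE_def by blast
          have "\<not> k < K" using True k1 unfolding FK_def by blast
          then have k: "x \<in> Qk \<sigma> k" "K \<le> k" using k1 by auto
          have "3 * real k < x$undefined" using Qk_coord[OF k(1)] by simp
          also have "\<dots> \<le> norm x" using component_le_norm_cart[of x undefined] by simp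
          finally have "R \<le> norm x" using k(2) unfolding K_def by linarith
          then have "x \<notin> closure {x. \<phi> x \<noteq> 0}" using sub by auto
          then have "divergence \<phi> x = 0" unfolding div G_def using C1_zero[OF Dd Dc comp] by simp
          then show ?thesis by simp
        next
          case False
          have "FK \<subseteq> EE \<sigma>" unfolding FK_def EE_def by blast
          then show ?thesis using False by auto
        qed
      qed
      then show ?thesis using integral_restrict_UNIV[of "EE \<sigma>" "divergence \<phi>"] integral_restrict_UNIV[of FK "divergence \<phi>"] by simp
    qed
    have Gi: "G i integrable_on FK \<and> integral FK (G i) \<le> 2 * real K" for i
    proof -
      obtain M where M: "\<And>x. \<bar>G i x\<bar> \<le> M" using C1_bnd[OF Dd Dc comp, of "axis i 1" i] unfolding G_def by blast
      have Gc: "continuous_on UNIV (G i)" unfolding G_def by (intro continuous_on_component Dc)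
      have Gm[measurable]: "G i \<in> borel_measurable borel" by (rule borel_measurable_continuous_onI[OF Gc])
      have intb: "integrable lborel (\<lambda>x. indicator FK x * G i x)"
      proof (rule Bochner_Integration.integrable_bound[where f="\<lambda>x. indicator FK x * M"])
        show "integrable lborel (\<lambda>x. indicator FK x * M)" using FKfin by simp
        show "(\<lambda>x. indicator FK x * G i x) \<in> borel_measurable lborel" by measurable
        show "AE x in lborel. norm (indicator FK x * G i x) \<le> norm (indicator FK x * M)"
        proof (rule AE_I2)
          fix x
          have "\<bar>G i x\<bar> \<le> \<bar>M\<bar>" using M[of x] by linarith
          then show "norm (indicator FK x * G i x) \<le> norm (indicator FK x * M)"
            by (simp split: split_indicator)
        qed
      qed
      have mb: "(\<lambda>x. indicator FK x *\<^sub>R G i x) \<in> lborel \<rightarrow>\<^sub>M borel" by measurable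
      have si: "set_integrable lebesgue FK (G i)"
        unfolding set_integrable_def using intb integrable_completion[OF mb] by simp
      have eq: "integral FK (G i) = (\<integral>x. indicator FK x * G i x \<partial>lborel)"
      proof -
        have "integral FK (G i) = (LINT x:FK|lebesgue. G i x)" using set_lebesgue_integral_eq_integral(2)[OF si] by simp
        also have "\<dots> = (\<integral>x. indicator FK x *\<^sub>R G i x \<partial>lborel)"
          unfolding set_lebesgue_integral_def by (rule integral_completion[OF mb])
        finally show ?thesis by simp
      qed
      have "(\<integral>x. indicator FK x * G i x \<partial>lborel) \<le> 2 * real K"
      proof (rule partial_int_bound[where g="\<lambda>x. \<phi> x $ i" and v="axis i 1" and M=M])
        show "continuous_on UNIV (\<lambda>x. \<phi> x $ i)" by (intro continuous_on_component C1_cont[OF Dd Dc comp])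
        show "\<bar>\<phi> x $ i\<bar> \<le> 1" for x using component_le_norm_cart[of "\<phi> x" i] n1[of x] by simp
        show "((\<lambda>t. \<phi> (x + t *\<^sub>R axis i 1) $ i) has_real_derivative G i x) (at 0)" for x
          unfolding G_def by (rule C1_line[OF Dd Dc comp])
        show "emeasure lborel ({y. y - h *\<^sub>R axis i 1 \<in> FK} - FK) + emeasure lborel (FK - {y. y - h *\<^sub>R axis i 1 \<in> FK}) \<le> ennreal (2 * real K * h)"
          if "0 < h" for h using FKsd[OF that] .
      qed (fact FKm FKfin Gc M | simp)+
      then show ?thesis using eq set_lebesgue_integral_eq_integral(1)[OF si] by simp
    qed
    have "integral FK (divergence \<phi>) = integral FK (\<lambda>x. \<Sum>i\<in>UNIV. G i x)"
      by (rule arg_cong[where f="integral FK"]) (rule ext, rule div)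
    also have "\<dots> = (\<Sum>i\<in>UNIV. integral FK (G i))" by (rule integral_sum) (use Gi in auto)
    also have "\<dots> \<le> (\<Sum>i\<in>(UNIV::'n set). 2 * real K)" by (intro sum_mono) (use Gi in auto)
    also have "\<dots> = real CARD('n) * (2 * real K)" by simp
    finally have "integral FK (divergence \<phi>) \<le> real CARD('n) * (2 * real K)" .
    then show ?thesis using EF by (simp add: K_def)
qed

lemma cacc:
  assumes s: "0 < \<sigma>" "\<sigma> < 1"
  shows "caccioppoli (EE \<sigma> :: (real^'n) set)"
  unfolding caccioppoli_def
proof (intro conjI allI)
  have "(\<Union>k. Qk \<sigma> k) \<in> sets (lebesgue :: (real^'n) measure)"
    unfolding Qk_def by (intro sets.countable_UN) auto
  then show "EE \<sigma> \<in> sets (lebesgue :: (real^'n) measure)" by (simp add: EE_def)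
  fix R :: real
  show "\<exists>B. \<forall>\<phi>. C1c_field (ball 0 R) \<phi> \<and> (\<forall>x. norm (\<phi> x) \<le> 1) \<longrightarrow> integral (EE \<sigma>) (divergence \<phi>) \<le> B"
    using cacc_bound[OF s, where R=R] by blast
qed


theorem proposition1p2:
  fixes \<sigma> :: real
  assumes "CARD('n::finite) \<ge> 2" and "0 < \<sigma>" and "\<sigma> < 1"
  shows "\<exists>E :: (real^'n) set. caccioppoli E \<and>
           (\<forall>s. 0 < s \<and> s < \<sigma> \<longrightarrow> frac_perimeter s E < \<infinity>) \<and>
           (\<forall>s. \<sigma> \<le> s \<and> s < 1 \<longrightarrow> frac_perimeter s E = \<infinity>)"
proof -
  have "caccioppoli (EE \<sigma> :: (real^'n) set)" using cacc assms(2,3) by blast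
  moreover have "\<forall>s. 0 < s \<and> s < \<sigma> \<longrightarrow> frac_perimeter s (EE \<sigma> :: (real^'n) set) < \<infinity>"
    using frac_upper assms(3) by blast
  moreover have "\<forall>s. \<sigma> \<le> s \<and> s < 1 \<longrightarrow> frac_perimeter s (EE \<sigma> :: (real^'n) set) = \<infinity>"
    using frac_lower assms(2) by blast
  ultimately show ?thesis by blast
qed

end
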